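(* Let $c<-14$, $u\in\Omega_0^M$ with $\kappa(u)=c$, and let $v$ be a node of the binary tree $B_\Lambda(u)$. Define a sequence $v_0=v,v_1,v_2,\dots$ by $v_{i+1}=Q_x(v_i)$ if $\tau(Q_x(v_i))<\tau(v_i)$; otherwise $v_{i+1}=Q_y(v_i)$ if $\tau(Q_y(v_i))<\tau(v_i)$; otherwise $v_{i+1}=Q_z(v_i)$. Then there is $n$ (depending only on $c$ and $v$) with $v_n=u$, and $v_0,\dots,v_n$ is the unique path from $v$ to $u$ in $B_\Lambda(u)$.
   Context: $\kappa(x,y,z)=-x^2-y^2+z^2+xyz-2$; for $u=(x,y,z)$, $\bar z(u)=-xy-z$ and $\tau(u)=-z\,\bar z(u)$. $Q_x(x,y,z)=(yz-x,y,z)$, $Q_y(x,y,z)=(x,xz-y,z)$, $Q_z(x,y,z)=(x,y,-xy-z)$, $\Lambda=\langle Q_x,Q_y,Q_z\rangle$. $\Omega_0^M=\{(x,y,z): z<-2,\ xy+z>2\}$. For $u\in\Omega_0^M$ the binary tree $B_\Lambda(u)$ is defined inductively: $u$ is the root; its two descendents are $Q_x(u)$ and $Q_y(u)$; if $v\ne u$ is a node with parent $\hat v$ and $v=\lambda\hat v$ with $\lambda\in\{Q_x,Q_y,Q_z\}$, then the two descendents of $v$ are $\lambda_1v$ and $\lambda_2v$ where $\{\lambda_1,\lambda_2\}=\{Q_x,Q_y,Q_z\}\setminus\{\lambda\}$. *)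

theory Defs
  imports Complex_Main
begin

type_synonym pt = "real \<times> real \<times> real"

definition kappa :: "pt \<Rightarrow> real" where
  "kappa u = (case u of (x,y,z) \<Rightarrow> - (x^2) - y^2 + z^2 + x*y*z - 2)"

definition zbar :: "pt \<Rightarrow> real" where
  "zbar u = (case u of (x,y,z) \<Rightarrow> -x*y - z)"

definition tau :: "pt \<Rightarrow> real" where
  "tau u = (case u of (x,y,z) \<Rightarrow> - z * zbar u)"

definition Qx :: "pt \<Rightarrow> pt" where "Qx u = (case u of (x,y,z) \<Rightarrow> (y*z - x, y, z))"
definition Qy :: "pt \<Rightarrow> pt" where "Qy u = (case u of (x,y,z) \<Rightarrow> (x, x*z - y, z))"
definition Qz :: "pt \<Rightarrow> pt" where "Qz u = (case u of (x,y,z) \<Rightarrow> (x, y, -x*y - z))"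

definition Omega0M :: "pt set" where
  "Omega0M = {(x,y,z). z < -2 \<and> x*y + z > 2}"

datatype gen = GX | GY | GZ

fun gapp :: "gen \<Rightarrow> pt \<Rightarrow> pt" where
  "gapp GX = Qx" | "gapp GY = Qy" | "gapp GZ = Qz"

text \<open>Nodes of the binary tree B_Lambda(u) are addressed by the list of generators
  applied from the root (first element applied first): the first generator is Qx or Qy,
  and consecutive generators are distinct.\<close>
fun tree_addr :: "gen list \<Rightarrow> bool" where
  "tree_addr [] = True"
| "tree_addr (g # gs) = (g \<noteq> GZ \<and> successively (\<noteq>) (g # gs))"

definition node_val :: "pt \<Rightarrow> gen list \<Rightarrow> pt" where
  "node_val u w = fold gapp w u"

definition desc_step :: "pt \<Rightarrow> pt" where
  "desc_step v = (if tau (Qx v) < tau v then Qx v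
                  else if tau (Qy v) < tau v then Qy v else Qz v)"

end

theory Submission
  imports Defs
begin

definition Inv :: "gen list \<Rightarrow> pt \<Rightarrow> bool" where
  "Inv w v = (case v of (x,y,z) \<Rightarrow> z^2 > 4 \<and>
     (if w = [] \<or> last w = GZ then x*y*z < 0
      else if last w = GX then x*y*z > 0 \<and> y^2*z^2 < 2*(x*y*z)
      else x*y*z > 0 \<and> x^2*z^2 < 2*(x*y*z)))"

lemma key_ineq:
  fixes x y z :: real
  assumes "x*y*z > 0" "y^2*z^2 < 2*(x*y*z)" "z^2 > 4"
  shows "x^2*z^2 > 2*(x*y*z)"
proof -
  define p where "p = x*y*z"
  define A where "A = x^2*z^2"
  define B where "B = y^2*z^2"
  have p: "p > 0" "B < 2*p" using assms by (auto simp: p_def B_def)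
  have AB: "A*B = p^2*z^2" by (simp add: A_def B_def p_def power_mult_distrib)
  have "x \<noteq> 0" "z \<noteq> 0" using assms(1) by auto
  hence A0: "A > 0" by (simp add: A_def)
  have "p^2*z^2 < A*(2*p)" using AB A0 p mult_strict_left_mono by metis
  hence "p*(p*z^2) < p*(2*A)" by (simp add: power2_eq_square algebra_simps)
  hence "p*z^2 < 2*A" using p(1) by (simp add: mult_less_cancel_left_pos)
  moreover have "p*z^2 > p*4" using p(1) assms(3) by simp
  ultimately show ?thesis unfolding A_def p_def by linarith
qed

lemma tree_addr_snoc:
  "tree_addr (w @ [g]) \<longleftrightarrow> tree_addr w \<and> (w = [] \<longrightarrow> g \<noteq> GZ) \<and> (w \<noteq> [] \<longrightarrow> last w \<noteq> g)"
proof (cases w)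
  case Nil then show ?thesis by simp
next
  case (Cons a as)
  have "successively (\<noteq>) ((a # as) @ [g]) \<longleftrightarrow> successively (\<noteq>) (a # as) \<and> last (a # as) \<noteq> g"
    by (simp only: successively_append_iff) simp
  then show ?thesis using Cons by simp
qed

lemma gapp_invol: "gapp g (gapp g v) = v"
  by (cases g; cases v; auto simp: Qx_def Qy_def Qz_def)

lemma inv_step:
  assumes "Inv w v" "tree_addr (w @ [g])"
  shows "Inv (w @ [g]) (gapp g v)"
proof -
  obtain x y z where v: "v = (x,y,z)" by (cases v)
  have c: "(w = [] \<longrightarrow> g \<noteq> GZ) \<and> (w \<noteq> [] \<longrightarrow> last w \<noteq> g)"
    using assms(2) tree_addr_snoc by blast
  have z4: "z^2 > 4" using assms(1) by (simp add: Inv_def v)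
  show ?thesis
  proof (cases "w = [] \<or> last w = GZ")
    case True
    hence p: "x*y*z < 0" using assms(1) by (simp add: Inv_def v)
    have "g \<noteq> GZ" using c True by auto
    then consider "g = GX" | "g = GY" by (cases g) auto
    then show ?thesis
    proof cases
      case 1
      have e: "(y*z-x)*y*z = y^2*z^2 - x*y*z" by (simp add: power2_eq_square algebra_simps)
      have nn: "y^2*z^2 \<ge> 0" by simp
      show ?thesis using 1 z4 by (simp add: Inv_def v Qx_def) (use nn e p in linarith)
    next
      case 2
      have e: "x*(x*z-y)*z = x^2*z^2 - x*y*z" by (simp add: power2_eq_square algebra_simps)
      have nn: "x^2*z^2 \<ge> 0" by simp
      show ?thesis using 2 z4 by (simp add: Inv_def v Qy_def) (use nn e p in linarith)
    qed
  next
    case False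
    hence wne: "w \<noteq> []" and lz: "last w \<noteq> GZ" by auto
    show ?thesis
    proof (cases "last w")
      case GX
      have p: "x*y*z > 0" "y^2*z^2 < 2*(x*y*z)" using assms(1) GX wne by (simp_all add: Inv_def v)
      have k: "x^2*z^2 > 2*(x*y*z)" using key_ineq p z4 by blast
      have "g \<noteq> GX" using c wne GX by auto
      then consider "g = GY" | "g = GZ" by (cases g) auto
      then show ?thesis
      proof cases
        case 1
        have e: "x*(x*z-y)*z = x^2*z^2 - x*y*z" by (simp add: power2_eq_square algebra_simps)
        show ?thesis using 1 by (simp add: Inv_def v Qy_def) (use e k p z4 in linarith)
      next
        case 2
        have e: "x*y*(-(x*y)-z) = -(x^2*y^2) - x*y*z" by (simp add: power2_eq_square algebra_simps)
        have e2: "(-(x*y)-z)^2 = x^2*y^2 + 2*(x*y*z) + z^2" by (simp add: power2_eq_square algebra_simps)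
        have nn: "x^2*y^2 \<ge> 0" by simp
        show ?thesis using 2 by (simp add: Inv_def v Qz_def) (use nn e e2 p z4 in linarith)
      qed
    next
      case GY
      have p: "x*y*z > 0" "x^2*z^2 < 2*(x*y*z)" using assms(1) GY wne by (simp_all add: Inv_def v)
      have k: "y^2*z^2 > 2*(x*y*z)" using key_ineq[of y x z] p z4 by (simp add: algebra_simps)
      have "g \<noteq> GY" using c wne GY by auto
      then consider "g = GX" | "g = GZ" by (cases g) auto
      then show ?thesis
      proof cases
        case 1
        have e: "(y*z-x)*y*z = y^2*z^2 - x*y*z" by (simp add: power2_eq_square algebra_simps)
        show ?thesis using 1 by (simp add: Inv_def v Qx_def) (use e k p z4 in linarith)
      next
        case 2
        have e: "x*y*(-(x*y)-z) = -(x^2*y^2) - x*y*z" by (simp add: power2_eq_square algebra_simps)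
        have e2: "(-(x*y)-z)^2 = x^2*y^2 + 2*(x*y*z) + z^2" by (simp add: power2_eq_square algebra_simps)
        have nn: "x^2*y^2 \<ge> 0" by simp
        show ?thesis using 2 by (simp add: Inv_def v Qz_def) (use nn e e2 p z4 in linarith)
      qed
    next
      case GZ then show ?thesis using lz by simp
    qed
  qed
qed

lemma node_val_snoc: "node_val u (w @ [g]) = gapp g (node_val u w)"
  by (simp add: node_val_def)

lemma inv_all:
  assumes "u \<in> Omega0M" "tree_addr w"
  shows "Inv w (node_val u w)"
  using assms(2)
proof (induction w rule: rev_induct)
  case Nil
  obtain x y z where u: "u = (x,y,z)" by (cases u)
  have h: "z < -2" "x*y + z > 2" using assms(1) by (auto simp: Omega0M_def u)
  have "x*y > 0" using h by linarith
  hence "x*y*z < 0" using h by (simp add: mult_pos_neg)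
  moreover have "z^2 > 4"
  proof -
    have "(2::real)^2 < (-z)^2" by (rule power_strict_mono) (use h in auto)
    then show ?thesis by simp
  qed
  ultimately show ?case by (simp add: Inv_def u node_val_def)
next
  case (snoc g w)
  have "tree_addr w" using snoc.prems tree_addr_snoc by blast
  then show ?case using snoc inv_step node_val_snoc by metis
qed

lemma tau_Qx: "tau (Qx (x,y,z)) - tau (x,y,z) = y^2*z^2 - 2*(x*y*z)"
  by (simp add: tau_def zbar_def Qx_def power2_eq_square algebra_simps)
lemma tau_Qy: "tau (Qy (x,y,z)) - tau (x,y,z) = x^2*z^2 - 2*(x*y*z)"
  by (simp add: tau_def zbar_def Qy_def power2_eq_square algebra_simps)

lemma desc_inv:
  assumes "Inv w v" "w \<noteq> []"
  shows "desc_step v = gapp (last w) v"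
proof -
  obtain x y z where v: "v = (x,y,z)" by (cases v)
  have z4: "z^2 > 4" using assms(1) by (simp add: Inv_def v)
  have a: "tau (Qx v) < tau v \<longleftrightarrow> y^2*z^2 < 2*(x*y*z)" using tau_Qx[of x y z] v by auto
  have b: "tau (Qy v) < tau v \<longleftrightarrow> x^2*z^2 < 2*(x*y*z)" using tau_Qy[of x y z] v by auto
  show ?thesis
  proof (cases "last w")
    case GX
    have "tau (Qx v) < tau v" unfolding a using assms GX by (simp add: Inv_def v)
    then show ?thesis using GX by (simp add: desc_step_def)
  next
    case GY
    have p: "x*y*z > 0" "x^2*z^2 < 2*(x*y*z)" using assms GY by (simp_all add: Inv_def v)
    have k: "y^2*z^2 > 2*(x*y*z)" using key_ineq[of y x z] p z4 by (simp add: algebra_simps)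
    have "\<not> tau (Qx v) < tau v" unfolding a using k by linarith
    moreover have "tau (Qy v) < tau v" unfolding b using p by linarith
    ultimately show ?thesis using GY by (simp add: desc_step_def)
  next
    case GZ
    have p: "x*y*z < 0" using assms GZ by (simp_all add: Inv_def v)
    have n1: "y^2*z^2 \<ge> 0" "x^2*z^2 \<ge> 0" by simp_all
    have "\<not> tau (Qx v) < tau v" unfolding a using n1 p by linarith
    moreover have "\<not> tau (Qy v) < tau v" unfolding b using n1 p by linarith
    ultimately show ?thesis using GZ by (simp add: desc_step_def)
  qed
qed

lemma desc_node:
  assumes "u \<in> Omega0M" "tree_addr w" "w \<noteq> []"
  shows "desc_step (node_val u w) = node_val u (butlast w)"
proof -
  obtain w' g where w: "w = w' @ [g]" using assms(3) by (metis rev_exhaust)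
  have "Inv w (node_val u w)" using inv_all assms by blast
  hence "desc_step (node_val u w) = gapp g (node_val u w)" using desc_inv w by simp
  also have "\<dots> = node_val u w'" by (simp add: w node_val_snoc gapp_invol)
  finally show ?thesis by (simp add: w)
qed

lemma tree_addr_take: "tree_addr w \<Longrightarrow> tree_addr (take k w)"
proof -
  assume a: "tree_addr w"
  have s: "successively (\<noteq>) w" using a by (cases w) auto
  have "successively (\<noteq>) (take k w @ drop k w)" using s by simp
  hence st: "successively (\<noteq>) (take k w)" by (simp only: successively_append_iff)
  show ?thesis
  proof (cases "take k w")
    case Nil then show ?thesis by (metis tree_addr.simps(1))
  next
    case (Cons b bs)
    then obtain as where w: "w = b # as" by (cases w) (auto, cases k, auto)
    then show ?thesis using a st Cons by simp
  qed
qed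

theorem mainTheorem10:
  fixes c :: real and u :: pt and w :: "gen list"
  assumes "c < -14" and "u \<in> Omega0M" and "kappa u = c"
    and "tree_addr w"
  shows "\<exists>n. (desc_step ^^ n) (node_val u w) = u \<and>
             n = length w \<and>
             (\<forall>i\<le>n. (desc_step ^^ i) (node_val u w) = node_val u (take (n - i) w))"
proof -
  define n where "n = length w"
  have all: "\<forall>i\<le>n. (desc_step ^^ i) (node_val u w) = node_val u (take (n - i) w)"
  proof (intro allI impI)
    fix i assume "i \<le> n"
    then show "(desc_step ^^ i) (node_val u w) = node_val u (take (n - i) w)"
    proof (induction i)
      case 0 then show ?case by (simp add: n_def)
    next
      case (Suc i)
      have ta: "tree_addr (take (n - i) w)" using tree_addr_take assms(4) by blast
      have ne: "take (n - i) w \<noteq> []" using Suc.prems by (cases w) (auto simp: n_def)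
      have "(desc_step ^^ Suc i) (node_val u w) = desc_step (node_val u (take (n - i) w))"
        using Suc by simp
      also have "\<dots> = node_val u (butlast (take (n - i) w))" using desc_node assms(2) ta ne by blast
      also have "butlast (take (n - i) w) = take (n - Suc i) w"
        using Suc.prems by (simp add: butlast_take n_def)
      finally show ?case .
    qed
  qed
  have "(desc_step ^^ n) (node_val u w) = u" using all by (simp add: node_val_def)
  then show ?thesis using all n_def by blast
qed

end
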